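(* Let $q\in K$ with $|q-1|<\omega$. Let $\{\lambda_n\}_{n\in\mathbb{J}}$ be a family with $\lambda_n\in\mathbf{W}(\mathcal{O}_K)$ and phantom vectors $(\phi_{n,0},\phi_{n,1},\dots)$. Then the formal power series $$a^+(T):=\exp\Big(\sum_{n\in\mathbb{J}}\sum_{m\ge0}\phi_{n,m}\,(q^{np^m}-1)\,\frac{T^{np^m}}{p^m}\Big)\in K[[T]]$$ belongs to $\mathcal{E}_K$.
   Context: $K$ is a field of characteristic $0$, complete for a discrete non-archimedean absolute value, residue field of characteristic $p>0$; $\mathcal{O}_K$ its ring of integers; $\omega=|p|^{1/(p-1)}$. $\mathcal{E}_K$ is the ring of Laurent series $\sum a_iT^i$ over $K$ with $\sup|a_i|<\infty$ and $|a_i|\to0$ as $i\to-\infty$. $\mathbb{J}=\{n\ge1:p\nmid n\}$. $\mathbf{W}(\mathcal{O}_K)$ is the ring of $p$-typical Witt vectors over $\mathcal{O}_K$; the phantom vector of $\lambda=(\lambda_0,\lambda_1,\ldots)$ is $\phi_m=\sum_{i=0}^mp^i\lambda_i^{p^{m-i}}$. *)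

theory Defs
  imports Complex_Main "HOL-Computational_Algebra.Formal_Power_Series"
          "HOL-Computational_Algebra.Primes"
begin

text \<open>A field K (of characteristic 0, via the type class) with an absolute value
  absv which is non-archimedean, discrete, complete, and whose residue field has
  characteristic p (equivalently, since p is prime and char K = 0: |p| < 1).\<close>

definition nonarch_abs :: "('a::field \<Rightarrow> real) \<Rightarrow> bool" where
  "nonarch_abs absv \<longleftrightarrow>
     (\<forall>x. absv x \<ge> 0) \<and> (\<forall>x. absv x = 0 \<longleftrightarrow> x = 0) \<and>
     (\<forall>x y. absv (x * y) = absv x * absv y) \<and>
     (\<forall>x y. absv (x + y) \<le> max (absv x) (absv y))"

definition discrete_abs :: "('a::field \<Rightarrow> real) \<Rightarrow> bool" where
  "discrete_abs absv \<longleftrightarrow>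
     (\<exists>\<pi>. absv \<pi> < 1 \<and> (\<forall>x. x \<noteq> 0 \<longrightarrow> (\<exists>k::int. absv x = absv \<pi> powi k)))"

definition complete_abs :: "('a::field \<Rightarrow> real) \<Rightarrow> bool" where
  "complete_abs absv \<longleftrightarrow>
     (\<forall>X::nat \<Rightarrow> 'a.
        (\<forall>e>0. \<exists>N. \<forall>m\<ge>N. \<forall>n\<ge>N. absv (X m - X n) < e) \<longrightarrow>
        (\<exists>L. \<forall>e>0. \<exists>N. \<forall>n\<ge>N. absv (X n - L) < e))"

definition padic_setting :: "('a::field_char_0 \<Rightarrow> real) \<Rightarrow> nat \<Rightarrow> bool" where
  "padic_setting absv p \<longleftrightarrow> nonarch_abs absv \<and> discrete_abs absv \<and> complete_abs absv
     \<and> prime p \<and> absv (of_nat p) < 1"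

definition omega :: "('a::field_char_0 \<Rightarrow> real) \<Rightarrow> nat \<Rightarrow> real" where
  "omega absv p = absv (of_nat p) powr (1 / (real p - 1))"

definition J_set :: "nat \<Rightarrow> nat set" where
  "J_set p = {n. n \<ge> 1 \<and> \<not> p dvd n}"

text \<open>A p-typical Witt vector over O_K is a sequence of elements of O_K.\<close>
definition witt_OK :: "('a::field_char_0 \<Rightarrow> real) \<Rightarrow> (nat \<Rightarrow> 'a) \<Rightarrow> bool" where
  "witt_OK absv lam \<longleftrightarrow> (\<forall>i. absv (lam i) \<le> 1)"

definition phantom :: "nat \<Rightarrow> (nat \<Rightarrow> 'a::field_char_0) \<Rightarrow> nat \<Rightarrow> 'a" where
  "phantom p lam m = (\<Sum>i\<le>m. of_nat p ^ i * lam i ^ (p ^ (m - i)))"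

text \<open>The formal power series
  sum over n in J, m \<ge> 0 of phi_{n,m} (q^{n p^m} - 1) T^{n p^m} / p^m.
  Each exponent N \<ge> 1 is n p^m for a unique n in J, m \<ge> 0 (m = multiplicity of p
  in N), so its coefficients are given directly.\<close>
definition inner_series :: "nat \<Rightarrow> 'a::field_char_0 \<Rightarrow> (nat \<Rightarrow> nat \<Rightarrow> 'a) \<Rightarrow> 'a fps" where
  "inner_series p q lam = Abs_fps (\<lambda>N.
     if N = 0 then 0 else
       (let m = multiplicity p N; n = N div p ^ m in
          phantom p (lam n) m * (q ^ N - 1) / of_nat p ^ m))"

text \<open>exp of a power series with zero constant term: composition with exp(X).\<close>
definition fps_exp_of :: "'a::field_char_0 fps \<Rightarrow> 'a fps" where
  "fps_exp_of f = fps_compose (fps_exp 1) f"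

definition E_ring :: "('a::field_char_0 \<Rightarrow> real) \<Rightarrow> (int \<Rightarrow> 'a) set" where
  "E_ring absv = {a. bdd_above (range (\<lambda>i. absv (a i))) \<and>
                     (\<lambda>k::nat. absv (a (- int k))) \<longlonglongrightarrow> 0}"

definition fps_to_laurent :: "'a::zero fps \<Rightarrow> (int \<Rightarrow> 'a)" where
  "fps_to_laurent f = (\<lambda>i. if i \<ge> 0 then fps_nth f (nat i) else 0)"

end

theory Submission
  imports Defs
begin

context
  fixes absv :: "'a::field_char_0 \<Rightarrow> real"
  assumes na: "nonarch_abs absv"
begin

lemma na_nonneg: "absv x \<ge> 0" using na unfolding nonarch_abs_def by blast
lemma na_mult: "absv (x * y) = absv x * absv y" using na unfolding nonarch_abs_def by blast
lemma na_add: "absv (x + y) \<le> max (absv x) (absv y)" using na unfolding nonarch_abs_def by blast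
lemma na_zero: "absv x = 0 \<longleftrightarrow> x = 0" using na unfolding nonarch_abs_def by blast

lemma na_0: "absv 0 = 0" using na_zero by simp

lemma na_one: "absv 1 = 1"
proof -
  have "absv 1 = absv 1 * absv 1" using na_mult[of 1 1] by simp
  moreover have "absv 1 \<noteq> 0" using na_zero by simp
  ultimately show ?thesis by simp
qed

lemma na_minus: "absv (- x) = absv x"
proof -
  have "absv (-1) * absv (-1) = 1" using na_mult[of "-1" "-1"] na_one by simp
  hence "absv (-1) = 1" using na_nonneg[of "-1"]
    by (smt (verit) mult_le_cancel_left1 mult_less_cancel_left1)
  thus ?thesis using na_mult[of "-1" x] by simp
qed

lemma na_diff: "absv (x - y) \<le> max (absv x) (absv y)"
  using na_add[of x "-y"] na_minus[of y] by simp

lemma na_power: "absv (x ^ n) = absv x ^ n"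
  by (induction n) (simp_all add: na_one na_mult)

lemma na_inverse: "absv (inverse x) = inverse (absv x)"
proof (cases "x = 0")
  case True thus ?thesis using na_0 by simp
next
  case False
  hence "absv x * absv (inverse x) = 1" using na_mult[of x "inverse x"] na_one by simp
  thus ?thesis by (rule inverse_unique[symmetric])
qed

lemma na_divide: "absv (x / y) = absv x / absv y"
  by (simp add: divide_inverse na_mult na_inverse)

lemma na_sum: "finite A \<Longrightarrow> c \<ge> 0 \<Longrightarrow> (\<And>i. i \<in> A \<Longrightarrow> absv (f i) \<le> c) \<Longrightarrow> absv (sum f A) \<le> c"
proof (induction A rule: finite_induct)
  case empty thus ?case using na_0 by simp
next
  case (insert x F)
  have "absv (sum f (insert x F)) = absv (f x + sum f F)" using insert by simp
  also have "\<dots> \<le> max (absv (f x)) (absv (sum f F))" by (rule na_add)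
  also have "\<dots> \<le> c" using insert by simp
  finally show ?case .
qed

lemma na_of_nat: "absv (of_nat n) \<le> 1"
proof (induction n)
  case 0 thus ?case using na_0 by simp
next
  case (Suc n)
  have "absv (of_nat (Suc n)) = absv (1 + of_nat n)" by simp
  also have "\<dots> \<le> max (absv 1) (absv (of_nat n))" by (rule na_add)
  also have "\<dots> \<le> 1" using Suc na_one by simp
  finally show ?case .
qed

lemma na_unit:
  assumes "prime p" "absv (of_nat p) < 1" "\<not> p dvd i"
  shows "absv (of_nat i) = 1"
proof -
  have i0: "i \<noteq> 0" using assms(3) by (metis dvd_0_right)
  have "coprime i p" using assms(1,3) by (metis coprime_commute prime_imp_coprime)
  then obtain x y where xy: "i * x = p * y + 1" using bezout_nat[OF i0, of p] by auto
  hence "(of_nat i * of_nat x :: 'a) = of_nat p * of_nat y + 1"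
    by (metis of_nat_1 of_nat_add of_nat_mult)
  hence "(1::'a) = of_nat i * of_nat x - of_nat p * of_nat y" by (simp add: algebra_simps)
  hence "1 \<le> max (absv (of_nat i * of_nat x)) (absv (of_nat p * of_nat y :: 'a))"
    using na_diff[of "of_nat i * of_nat x" "of_nat p * of_nat y"] na_one by simp
  moreover have "absv (of_nat i * of_nat x :: 'a) \<le> absv (of_nat i :: 'a)"
    unfolding na_mult by (rule mult_left_le[OF na_of_nat na_nonneg])
  moreover have "absv (of_nat p * of_nat y :: 'a) < 1"
  proof -
    have "absv (of_nat p * of_nat y :: 'a) \<le> absv (of_nat p :: 'a)"
      unfolding na_mult by (rule mult_left_le[OF na_of_nat na_nonneg])
    thus ?thesis using assms(2) by linarith
  qed
  ultimately have "1 \<le> absv (of_nat i :: 'a)" by linarith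
  thus ?thesis using na_of_nat[of i] by simp
qed

lemma fact_abs:
  assumes "prime p" "absv (of_nat p) < 1"
  shows "absv (fact j :: 'a) = absv (of_nat p :: 'a) ^ (j div p) * absv (fact (j div p) :: 'a)"
proof (induction j)
  case 0 thus ?case by (simp add: na_one)
next
  case (Suc j)
  have p2: "p \<ge> 2" using assms(1) prime_ge_2_nat by blast
  then obtain k where pk: "p = Suc k" and k1: "k \<ge> 1" by (cases p) auto
  show ?case
  proof (cases "p dvd Suc j")
    case True
    then obtain a where a: "Suc j = p * a" by blast
    have "a \<noteq> 0" using a by (cases a) auto
    then obtain b where ab: "a = Suc b" by (cases a) auto
    have jeq: "j = p * b + k" using a ab pk by simp
    have d1: "Suc j div p = Suc b" using a ab p2 by simp
    have "j div p = b + k div p" unfolding jeq using p2 by simp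
    moreover have "k div p = 0" using pk by simp
    ultimately have d2: "j div p = b" by simp
    have fa: "(fact (Suc b) :: 'a) = of_nat (Suc b) * fact b" by (rule fact_Suc)
    have e1: "absv (of_nat (Suc j) :: 'a) = absv (of_nat p :: 'a) * absv (of_nat (Suc b) :: 'a)"
    proof -
      have "(of_nat (Suc j) :: 'a) = of_nat p * of_nat (Suc b)" by (simp only: a ab of_nat_mult)
      thus ?thesis by (simp only: na_mult)
    qed
    have "absv (fact (Suc j) :: 'a) = absv (of_nat (Suc j) :: 'a) * absv (fact j :: 'a)"
      by (simp only: fact_Suc na_mult)
    also have "\<dots> = absv (of_nat p :: 'a) * absv (of_nat (Suc b) :: 'a) *
        (absv (of_nat p :: 'a) ^ b * absv (fact b :: 'a))"
      by (simp only: e1 Suc.IH d2)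
    also have "\<dots> = absv (of_nat p :: 'a) ^ Suc b * absv (fact (Suc b) :: 'a)"
      by (simp only: fa na_mult power_Suc mult_ac)
    finally show ?thesis using d1 by simp
  next
    case False
    have d: "Suc j div p = j div p" using False div_Suc[of j p] by (auto simp: dvd_eq_mod_eq_0)
    have "absv (fact (Suc j) :: 'a) = absv (of_nat (Suc j) :: 'a) * absv (fact j :: 'a)"
      by (simp only: fact_Suc na_mult)
    also have "\<dots> = absv (fact j :: 'a)" using na_unit[OF assms False] by simp
    finally show ?thesis using Suc.IH d by simp
  qed
qed

lemma fact_bound:
  assumes "prime p" "absv (of_nat p) < 1" "w > 0" "w \<le> 1" "w ^ (p - 1) = absv (of_nat p :: 'a)"
  shows "absv (fact j :: 'a) \<ge> w ^ j"
proof (induction j rule: less_induct)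
  case (less j)
  show ?case
  proof (cases "j = 0")
    case True thus ?thesis by (simp add: na_one)
  next
    case False
    have p2: "p \<ge> 2" using assms(1) prime_ge_2_nat by blast
    then obtain k where pk: "p = Suc k" by (cases p) auto
    define a where "a = j div p"
    have lt: "a < j" using False p2 unfolding a_def by simp
    have le: "p * a \<le> j" unfolding a_def by (simp add: mult.commute)
    have "w ^ j \<le> w ^ (p * a)"
      by (rule power_decreasing[OF le]) (use assms(3,4) in auto)
    also have "w ^ (p * a) = (w ^ (p - 1)) ^ a * w ^ a"
      by (simp add: pk power_mult[symmetric] power_add[symmetric] algebra_simps)
    also have "\<dots> \<le> absv (of_nat p :: 'a) ^ a * absv (fact a :: 'a)"
      using less[OF lt] assms(5) by (simp add: mult_left_mono na_nonneg)
    also have "\<dots> = absv (fact j :: 'a)" using fact_abs[OF assms(1,2), of j] a_def by simp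
    finally show ?thesis .
  qed
qed

lemma pow_n: "absv x \<le> 1 \<Longrightarrow> absv (x ^ n - 1) \<le> absv (x - 1)"
proof (induction n)
  case 0 thus ?case using na_0 na_nonneg by simp
next
  case (Suc n)
  have "x ^ Suc n - 1 = x * (x ^ n - 1) + (x - 1)" by (simp add: algebra_simps)
  hence "absv (x ^ Suc n - 1) \<le> max (absv (x * (x ^ n - 1))) (absv (x - 1))"
    using na_add by metis
  moreover have "absv (x * (x ^ n - 1)) \<le> absv (x - 1)"
  proof -
    have "absv (x * (x ^ n - 1)) \<le> absv (x ^ n - 1)"
      unfolding na_mult using Suc.prems by (rule mult_left_le_one_le[OF na_nonneg na_nonneg])
    thus ?thesis using Suc by linarith
  qed
  ultimately show ?case by linarith
qed

lemma pow_p: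
  assumes "prime p" "w > 0" "w \<le> 1" "w ^ (p - 1) = absv (of_nat p :: 'a)" "absv (x - 1) \<le> w"
  shows "absv (x ^ p - 1) \<le> absv (of_nat p :: 'a) * absv (x - 1)"
proof -
  define t where "t = x - 1"
  have p2: "p \<ge> 2" using assms(1) prime_ge_2_nat by blast
  then obtain k where pk: "p = Suc k" by (cases p) auto
  have t1: "absv t \<le> 1" using assms(3,5) t_def by simp
  have "x ^ p = (t + 1) ^ p" by (simp add: t_def)
  also have "\<dots> = (\<Sum>i\<le>p. of_nat (p choose i) * t ^ i * 1 ^ (p - i))" by (rule binomial_ring)
  also have "\<dots> = 1 + (\<Sum>i\<le>k. of_nat (p choose Suc i) * t ^ Suc i)"
    unfolding pk by (subst sum.atMost_Suc_shift) simp
  finally have xp: "x ^ p - 1 = (\<Sum>i\<le>k. of_nat (p choose Suc i) * t ^ Suc i)" by simp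
  have "absv (\<Sum>i\<le>k. of_nat (p choose Suc i) * t ^ Suc i) \<le> absv (of_nat p :: 'a) * absv t"
  proof (rule na_sum)
    show "0 \<le> absv (of_nat p :: 'a) * absv t" using na_nonneg by simp
  next
    fix i assume i: "i \<in> {..k}"
    show "absv (of_nat (p choose Suc i) * t ^ Suc i) \<le> absv (of_nat p :: 'a) * absv t"
    proof (cases "Suc i = p")
      case True
      have "absv (of_nat (p choose Suc i) * t ^ Suc i) = absv t ^ (p - 1) * absv t"
        using True by (simp add: na_mult na_power na_one pk)
      also have "\<dots> \<le> w ^ (p - 1) * absv t"
        by (rule mult_right_mono[OF power_mono]) (use assms(5) na_nonneg t_def in auto)
      finally show ?thesis using assms(4) by simp
    next
      case False
      hence lt: "Suc i < p" using i pk by auto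
      have "p dvd (p choose Suc i)" by (rule dvd_choose_prime) (use lt assms(1) in auto)
      then obtain c where c: "p choose Suc i = p * c" by blast
      have "absv (of_nat (p choose Suc i) :: 'a) \<le> absv (of_nat p :: 'a)"
        unfolding c of_nat_mult na_mult by (rule mult_left_le[OF na_of_nat na_nonneg])
      moreover have "absv (t ^ Suc i) \<le> absv t"
        unfolding na_power using t1 na_nonneg[of t]
        by (simp add: mult_left_le power_le_one)
      ultimately show ?thesis unfolding na_mult
        by (rule mult_mono) (use na_nonneg in auto)
    qed
  qed simp
  thus ?thesis using xp t_def by simp
qed

lemma pow_pm:
  assumes "prime p" "w > 0" "w \<le> 1" "w ^ (p - 1) = absv (of_nat p :: 'a)" "absv (y - 1) \<le> w"
    "absv (of_nat p :: 'a) < 1"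
  shows "absv (y ^ (p ^ m) - 1) \<le> absv (of_nat p :: 'a) ^ m * absv (y - 1)"
proof (induction m)
  case 0 thus ?case by simp
next
  case (Suc m)
  have pm1: "absv (of_nat p :: 'a) ^ m \<le> 1"
    using assms(6) na_nonneg by (simp add: power_le_one)
  have "absv (y ^ (p ^ m) - 1) \<le> absv (y - 1)"
  proof -
    have "absv (of_nat p :: 'a) ^ m * absv (y - 1) \<le> absv (y - 1)"
      by (rule mult_left_le_one_le[OF na_nonneg _ pm1]) (simp add: na_nonneg)
    thus ?thesis using Suc.IH by linarith
  qed
  hence h: "absv (y ^ (p ^ m) - 1) \<le> w" using assms(5) by linarith
  have "y ^ (p ^ Suc m) = (y ^ (p ^ m)) ^ p" by (simp add: power_mult[symmetric] mult.commute)
  hence "absv (y ^ (p ^ Suc m) - 1) \<le> absv (of_nat p :: 'a) * absv (y ^ (p ^ m) - 1)"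
    using pow_p[OF assms(1-4) h] by simp
  also have "\<dots> \<le> absv (of_nat p :: 'a) * (absv (of_nat p :: 'a) ^ m * absv (y - 1))"
    by (rule mult_left_mono[OF Suc.IH na_nonneg])
  finally show ?case by (simp add: mult.assoc)
qed

lemma power_coeff_bound:
  assumes "\<And>N. absv (fps_nth G N) \<le> r" "r \<ge> 0"
  shows "absv (fps_nth (G ^ j) k) \<le> r ^ j"
proof (induction j arbitrary: k)
  case 0 thus ?case by (simp add: na_one na_0)
next
  case (Suc j)
  have "absv (fps_nth (G ^ Suc j) k) = absv (\<Sum>i=0..k. fps_nth G i * fps_nth (G ^ j) (k - i))"
    by (simp add: fps_mult_nth)
  also have "\<dots> \<le> r ^ Suc j"
  proof (rule na_sum)
    fix i show "absv (fps_nth G i * fps_nth (G ^ j) (k - i)) \<le> r ^ Suc j"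
      unfolding na_mult power_Suc
      by (rule mult_mono[OF assms(1) Suc.IH]) (use assms(2) na_nonneg in auto)
  qed (use assms(2) in auto)
  finally show ?case .
qed

lemma inner_bound:
  assumes "prime p" "absv (of_nat p :: 'a) < 1" "w > 0" "w \<le> 1" "w ^ (p - 1) = absv (of_nat p :: 'a)"
    and q: "absv (q - 1) \<le> w" and lam: "\<forall>n\<in>J_set p. witt_OK absv (lam n)"
  shows "absv (fps_nth (inner_series p q lam) N) \<le> absv (q - 1)"
proof (cases "N = 0")
  case True thus ?thesis by (simp add: inner_series_def na_0 na_nonneg)
next
  case False
  define m where "m = multiplicity p N"
  define n where "n = N div p ^ m"
  have p2: "p \<ge> 2" using assms(1) prime_ge_2_nat by blast
  have "p ^ m dvd N" unfolding m_def by (rule multiplicity_dvd)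
  hence Nn: "N = n * p ^ m" unfolding n_def by simp
  have ndvd: "\<not> p dvd n" unfolding n_def m_def
    by (rule multiplicity_decompose) (use False p2 in auto)
  have "n \<noteq> 0" using Nn False by auto
  hence nJ: "n \<in> J_set p" using ndvd by (simp add: J_set_def)
  have coef: "fps_nth (inner_series p q lam) N = phantom p (lam n) m * (q ^ N - 1) / of_nat p ^ m"
    using False by (simp add: inner_series_def m_def n_def Let_def)
  have ph: "absv (phantom p (lam n) m) \<le> 1"
    unfolding phantom_def
  proof (rule na_sum)
    fix i show "absv (of_nat p ^ i * lam n i ^ p ^ (m - i)) \<le> 1"
    proof -
      have l: "absv (lam n i) \<le> 1" using lam nJ by (simp add: witt_OK_def)
      show ?thesis unfolding na_mult na_power
        by (rule mult_le_one) (use l na_of_nat na_nonneg in \<open>auto intro: power_le_one\<close>)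
    qed
  qed auto
  have q1: "absv q \<le> 1"
  proof -
    have "absv q = absv ((q - 1) + 1)" by simp
    also have "\<dots> \<le> max (absv (q - 1)) (absv 1)" by (rule na_add)
    finally show ?thesis using q assms(4) na_one by simp
  qed
  have qn: "absv (q ^ n - 1) \<le> absv (q - 1)" by (rule pow_n[OF q1])
  have "q ^ N = (q ^ n) ^ (p ^ m)" unfolding Nn by (rule power_mult)
  hence qN: "absv (q ^ N - 1) \<le> absv (of_nat p :: 'a) ^ m * absv (q - 1)"
    using pow_pm[OF assms(1,3,4,5) _ assms(2), of "q ^ n" m] qn q
      mult_left_mono[OF qn zero_le_power[OF na_nonneg]]
    by (smt (verit))
  have pp: "absv (of_nat p :: 'a) > 0" using p2 na_zero[of "of_nat p"] na_nonneg[of "of_nat p"] by simp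
  have "absv (fps_nth (inner_series p q lam) N)
      = absv (phantom p (lam n) m) * absv (q ^ N - 1) / absv (of_nat p :: 'a) ^ m"
    unfolding coef na_divide na_mult na_power ..
  also have "\<dots> \<le> 1 * (absv (of_nat p :: 'a) ^ m * absv (q - 1)) / absv (of_nat p :: 'a) ^ m"
    by (rule divide_right_mono[OF mult_mono[OF ph qN]]) (use na_nonneg in auto)
  also have "\<dots> = absv (q - 1)" using pp by simp
  finally show ?thesis .
qed

lemma exp_coeff_bound:
  assumes "prime p" "absv (of_nat p :: 'a) < 1" "w > 0" "w \<le> 1" "w ^ (p - 1) = absv (of_nat p :: 'a)"
    and G: "\<And>N. absv (fps_nth G N) \<le> r" and r: "0 \<le> r" "r \<le> w"
  shows "absv (fps_nth (fps_exp_of G) k) \<le> 1"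
  unfolding fps_exp_of_def fps_compose_nth
proof (rule na_sum)
  fix i
  have f: "absv (fact i :: 'a) \<ge> w ^ i" by (rule fact_bound[OF assms(1-5)])
  have wi: "w ^ i > 0" using assms(3) by simp
  have "absv (fps_nth (fps_exp 1) i * fps_nth (G ^ i) k) = absv (fps_nth (G ^ i) k) / absv (fact i :: 'a)"
    by (simp add: na_mult na_divide na_one)
  also have "\<dots> \<le> r ^ i / w ^ i"
    by (rule frac_le[OF _ power_coeff_bound[OF G r(1)] wi f]) (use r in simp)
  also have "\<dots> \<le> 1" using wi power_mono[OF r(2) r(1), of i] by simp
  finally show "absv (fps_nth (fps_exp 1) i * fps_nth (G ^ i) k) \<le> 1" .
qed auto

end

theorem lemma5p4p4:
  fixes absv :: "'a::field_char_0 \<Rightarrow> real" and p :: nat and q :: 'a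
    and lam :: "nat \<Rightarrow> nat \<Rightarrow> 'a"
  assumes "padic_setting absv p"
    and "absv (q - 1) < omega absv p"
    and "\<forall>n\<in>J_set p. witt_OK absv (lam n)"
  shows "fps_to_laurent (fps_exp_of (inner_series p q lam)) \<in> E_ring absv"
proof -
  have na: "nonarch_abs absv" and pr: "prime p" and p1: "absv (of_nat p) < 1"
    using assms(1) by (auto simp: padic_setting_def)
  define w where "w = omega absv p"
  have p2: "p \<ge> 2" using pr prime_ge_2_nat by blast
  have pp: "absv (of_nat p :: 'a) > 0"
    using p2 na_zero[OF na, of "of_nat p"] na_nonneg[OF na, of "of_nat p"] by simp
  have w0: "w > 0" using pp unfolding w_def omega_def by simp
  have w1: "w \<le> 1" using pp p1 p2 unfolding w_def omega_def by (intro powr_le1) auto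
  have wp: "w ^ (p - 1) = absv (of_nat p :: 'a)"
  proof -
    have "w ^ (p - 1) = absv (of_nat p :: 'a) powr (real (p - 1) * (1 / (real p - 1)))"
      unfolding w_def omega_def using pp by (simp add: powr_power)
    also have "real (p - 1) * (1 / (real p - 1)) = 1" using p2 by (simp add: of_nat_diff)
    finally show ?thesis using pp by simp
  qed
  have r0: "0 \<le> absv (q - 1)" by (rule na_nonneg[OF na])
  have rw: "absv (q - 1) \<le> w" using assms(2) w_def by simp
  have G: "\<And>N. absv (fps_nth (inner_series p q lam) N) \<le> absv (q - 1)"
    by (rule inner_bound[OF na pr p1 w0 w1 wp rw assms(3)])
  have C: "\<And>k. absv (fps_nth (fps_exp_of (inner_series p q lam)) k) \<le> 1"
    by (rule exp_coeff_bound[OF na pr p1 w0 w1 wp G r0 rw])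
  let ?a = "fps_to_laurent (fps_exp_of (inner_series p q lam))"
  have b: "bdd_above (range (\<lambda>i. absv (?a i)))"
  proof (rule bdd_aboveI2)
    fix i show "absv (?a i) \<le> 1"
      using C na_0[OF na] by (simp add: fps_to_laurent_def)
  qed
  have l: "(\<lambda>k::nat. absv (?a (- int k))) \<longlonglongrightarrow> 0"
  proof (rule tendsto_eventually)
    show "\<forall>\<^sub>F k in sequentially. absv (?a (- int k)) = 0"
      unfolding eventually_sequentially
      by (rule exI[of _ 1]) (simp add: fps_to_laurent_def na_0[OF na])
  qed
  show ?thesis using b l by (simp add: E_ring_def)
qed

end
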